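(* Let $e$ be a series-rational expression. One can obtain a fork-acyclic and finite pomset automaton $A$ with a state $q$ such that $L_A(q)=[\![e]\!]$.
   Context: Fix a finite alphabet $\Sigma$. Pomsets are isomorphism classes of finite labelled posets over $\Sigma$; $1$ is the empty pomset; sequential composition $U\cdot V$ is the disjoint union with all elements of $U$ below all elements of $V$; parallel composition $U\parallel V$ is the disjoint union of orders. $\mathsf{SP}(\Sigma)$ is the smallest set containing $1$ and the one-element pomsets $a\in\Sigma$ closed under $\cdot,\parallel$. These lift pointwise to sets of pomsets, and $L^*=\bigcup_n L^n$ with $L^0=\{1\}$, $L^{n+1}=L\cdot L^n$. Series-rational expressions are generated by $e,f::=0\mid 1\mid a\in\Sigma\mid e+f\mid e\cdot f\mid e\parallel f\mid e^*$, with semantics $[\![0]\!]=\emptyset$, $[\![1]\!]=\{1\}$, $[\![a]\!]=\{a\}$, $[\![e+f]\!]=[\![e]\!]\cup[\![f]\!]$, $[\![e\cdot f]\!]=[\![e]\!]\cdot[\![f]\!]$, $[\![e\parallel f]\!]=[\![e]\!]\parallel[\![f]\!]$, $[\![e^*]\!]=[\![e]\!]^*$. A pomset automaton is $A=\langle Q,F,\delta,\gamma\rangle$ with $F\subseteq Q$, $\delta:Q\times\Sigma\to2^Q$, $\gamma:Q\times\mathbb{M}(Q)\to2^Q$ ($\mathbb{M}(Q)$ finite multisets over $Q$), each $q$ having finitely many $\phi$ with $\gamma(q,\phi)\ne\emptyset$; it is finite if $Q$ is finite. The run relation $\to_A$ is the smallest relation with: $q\xrightarrow{1}_A q$; $q\xrightarrow{a}_A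 q'$ if $q'\in\delta(q,a)$; $q\xrightarrow{U\cdot V}_A q'$ if $q\xrightarrow{U}_A q''\xrightarrow{V}_A q'$; $q\xrightarrow{U_1\parallel\cdots\parallel U_n}_A q'$ if $q'\in\gamma(q,\{\!|q_1,\dots,q_n|\!\})$ and each $q_i\xrightarrow{U_i}_A q_i'$ for some $q_i'\in F$. $L_A(q)=\{U\mid\exists q'\in F.\ q\xrightarrow{U}_A q'\}$. The support relation $\preceq_A$ is the smallest preorder with $q'\preceq_A q$ whenever $q'\in\delta(q,a)$, or $q'\in\gamma(q,\phi)$, or $q'\in\phi$ with $\gamma(q,\phi)\ne\emptyset$; $A$ is fork-acyclic if $r\in\phi$ and $\gamma(q,\phi)\ne\emptyset$ imply $q\not\preceq_A r$. *)

theory Defs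
  imports Main "HOL-Library.Multiset"
begin

text \<open>A finite labelled poset is represented concretely by a carrier (a finite set of
natural numbers), a partial order on the carrier, and a labelling function (only its
values on the carrier matter).\<close>

type_synonym 'a lposet = "nat set \<times> (nat \<times> nat) set \<times> (nat \<Rightarrow> 'a)"

definition wf_lposet :: "'a lposet \<Rightarrow> bool" where
  "wf_lposet P = (case P of (V, R, l) \<Rightarrow>
     finite V \<and> R \<subseteq> V \<times> V \<and> refl_on V R \<and> antisym R \<and> trans R)"

definition iso_lposet :: "'a lposet \<Rightarrow> 'a lposet \<Rightarrow> bool" where
  "iso_lposet P Q = (case P of (V, R, l) \<Rightarrow> case Q of (W, S, m) \<Rightarrow>
     (\<exists>f. bij_betw f V W \<and> (\<forall>x\<in>V. \<forall>y\<in>V. (x, y) \<in> R \<longleftrightarrow> (f x, f y) \<in> S)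
          \<and> (\<forall>x\<in>V. m (f x) = l x)))"

definition iso_class :: "'a lposet \<Rightarrow> 'a lposet set" where
  "iso_class P = {Q. wf_lposet Q \<and> iso_lposet P Q}"

typedef 'a pomset = "{C :: 'a lposet set. \<exists>P. wf_lposet P \<and> C = iso_class P}"
proof
  show "iso_class ({}, {}, (\<lambda>_. undefined)) \<in> {C :: 'a lposet set. \<exists>P. wf_lposet P \<and> C = iso_class P}"
    by (auto simp: wf_lposet_def refl_on_def antisym_def trans_def)
qed

definition pomset_of :: "'a lposet \<Rightarrow> 'a pomset" where
  "pomset_of P = Abs_pomset (iso_class P)"

definition rep_lposet :: "'a pomset \<Rightarrow> 'a lposet" where
  "rep_lposet U = (SOME P. P \<in> Rep_pomset U)"

definition disj_union :: "bool \<Rightarrow> 'a lposet \<Rightarrow> 'a lposet \<Rightarrow> 'a lposet" where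
  "disj_union below P Q = (case P of (V, R, l) \<Rightarrow> case Q of (W, S, m) \<Rightarrow>
     ((\<lambda>x. 2 * x) ` V \<union> (\<lambda>x. 2 * x + 1) ` W,
      {(2 * x, 2 * y) | x y. (x, y) \<in> R} \<union> {(2 * x + 1, 2 * y + 1) | x y. (x, y) \<in> S}
        \<union> (if below then {(2 * x, 2 * y + 1) | x y. x \<in> V \<and> y \<in> W} else {}),
      (\<lambda>n. if even n then l (n div 2) else m (n div 2))))"

definition pom_one :: "'a pomset" where
  "pom_one = pomset_of ({}, {}, (\<lambda>_. undefined))"

definition pom_atom :: "'a \<Rightarrow> 'a pomset" where
  "pom_atom a = pomset_of ({0}, {(0, 0)}, (\<lambda>_. a))"

definition pom_seq :: "'a pomset \<Rightarrow> 'a pomset \<Rightarrow> 'a pomset" where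
  "pom_seq U V = pomset_of (disj_union True (rep_lposet U) (rep_lposet V))"

definition pom_par :: "'a pomset \<Rightarrow> 'a pomset \<Rightarrow> 'a pomset" where
  "pom_par U V = pomset_of (disj_union False (rep_lposet U) (rep_lposet V))"

definition pom_par_list :: "'a pomset list \<Rightarrow> 'a pomset" where
  "pom_par_list Us = foldr pom_par Us pom_one"

definition lang_seq :: "'a pomset set \<Rightarrow> 'a pomset set \<Rightarrow> 'a pomset set" where
  "lang_seq L M = {pom_seq U V | U V. U \<in> L \<and> V \<in> M}"

definition lang_par :: "'a pomset set \<Rightarrow> 'a pomset set \<Rightarrow> 'a pomset set" where
  "lang_par L M = {pom_par U V | U V. U \<in> L \<and> V \<in> M}"

fun lang_pow :: "'a pomset set \<Rightarrow> nat \<Rightarrow> 'a pomset set" where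
  "lang_pow L 0 = {pom_one}"
| "lang_pow L (Suc n) = lang_seq L (lang_pow L n)"

definition lang_star :: "'a pomset set \<Rightarrow> 'a pomset set" where
  "lang_star L = (\<Union>n. lang_pow L n)"

datatype 'a sr_exp =
    SZero
  | SOne
  | SSym 'a
  | SPlus "'a sr_exp" "'a sr_exp"
  | SSeq "'a sr_exp" "'a sr_exp"
  | SPar "'a sr_exp" "'a sr_exp"
  | SStar "'a sr_exp"

fun sem :: "'a sr_exp \<Rightarrow> 'a pomset set" where
  "sem SZero = {}"
| "sem SOne = {pom_one}"
| "sem (SSym a) = {pom_atom a}"
| "sem (SPlus e f) = sem e \<union> sem f"
| "sem (SSeq e f) = lang_seq (sem e) (sem f)"
| "sem (SPar e f) = lang_par (sem e) (sem f)"
| "sem (SStar e) = lang_star (sem e)"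

record ('s, 'a) pomset_automaton =
  states :: "'s set"
  accepting :: "'s set"
  delta :: "'s \<Rightarrow> 'a \<Rightarrow> 's set"
  gamma :: "'s \<Rightarrow> 's multiset \<Rightarrow> 's set"

definition wf_pa :: "('s, 'a) pomset_automaton \<Rightarrow> bool" where
  "wf_pa A \<longleftrightarrow>
     accepting A \<subseteq> states A
   \<and> (\<forall>q a. delta A q a \<subseteq> states A \<and> (q \<notin> states A \<longrightarrow> delta A q a = {}))
   \<and> (\<forall>q \<phi>. gamma A q \<phi> \<subseteq> states A
        \<and> (gamma A q \<phi> \<noteq> {} \<longrightarrow> q \<in> states A \<and> set_mset \<phi> \<subseteq> states A))
   \<and> (\<forall>q. finite {\<phi>. gamma A q \<phi> \<noteq> {}})"

definition finite_pa :: "('s, 'a) pomset_automaton \<Rightarrow> bool" where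
  "finite_pa A \<longleftrightarrow> finite (states A)"

inductive run :: "('s, 'a) pomset_automaton \<Rightarrow> 's \<Rightarrow> 'a pomset \<Rightarrow> 's \<Rightarrow> bool"
  for A where
  run_one: "run A q pom_one q"
| run_atom: "q' \<in> delta A q a \<Longrightarrow> run A q (pom_atom a) q'"
| run_seq: "run A q U q'' \<Longrightarrow> run A q'' V q' \<Longrightarrow> run A q (pom_seq U V) q'"
| run_par: "q' \<in> gamma A q (mset (map fst xs)) \<Longrightarrow>
            (\<forall>(qi, Ui) \<in> set xs. \<exists>qf \<in> accepting A. run A qi Ui qf) \<Longrightarrow>
            run A q (pom_par_list (map snd xs)) q'"

definition lang_pa :: "('s, 'a) pomset_automaton \<Rightarrow> 's \<Rightarrow> 'a pomset set" where
  "lang_pa A q = {U. \<exists>q' \<in> accepting A. run A q U q'}"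

definition support_step :: "('s, 'a) pomset_automaton \<Rightarrow> 's \<Rightarrow> 's \<Rightarrow> bool" where
  "support_step A q' q \<longleftrightarrow>
     (\<exists>a. q' \<in> delta A q a) \<or> (\<exists>\<phi>. q' \<in> gamma A q \<phi>) \<or> (\<exists>\<phi>. q' \<in># \<phi> \<and> gamma A q \<phi> \<noteq> {})"

definition supports :: "('s, 'a) pomset_automaton \<Rightarrow> 's \<Rightarrow> 's \<Rightarrow> bool" where
  "supports A = (support_step A)\<^sup>*\<^sup>*"

definition fork_acyclic :: "('s, 'a) pomset_automaton \<Rightarrow> bool" where
  "fork_acyclic A \<longleftrightarrow> (\<forall>q \<phi> r. r \<in># \<phi> \<and> gamma A q \<phi> \<noteq> {} \<longrightarrow> \<not> supports A q r)"

end

theory Submission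
  imports Defs "HOL-Library.Nat_Bijection"
begin


definition car :: "'a lposet \<Rightarrow> nat set" where "car P = fst P"
definition rel :: "'a lposet \<Rightarrow> (nat \<times> nat) set" where "rel P = fst (snd P)"
definition lab :: "'a lposet \<Rightarrow> nat \<Rightarrow> 'a" where "lab P = snd (snd P)"
definition ev :: "nat \<Rightarrow> nat" where "ev x = 2 * x"
definition od :: "nat \<Rightarrow> nat" where "od x = 2 * x + 1"

lemma ev_inj[simp]: "ev x = ev y \<longleftrightarrow> x = y" by (auto simp: ev_def)
lemma od_inj[simp]: "od x = od y \<longleftrightarrow> x = y" by (auto simp: od_def)
lemma ev_od[simp]: "ev x \<noteq> od y" "od y \<noteq> ev x" by (auto simp: ev_def od_def) presburger+

lemma wf_lposet_alt: "wf_lposet P \<longleftrightarrow> finite (car P) \<and> rel P \<subseteq> car P \<times> car P \<and>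
   refl_on (car P) (rel P) \<and> antisym (rel P) \<and> trans (rel P)"
  by (cases P) (auto simp: wf_lposet_def car_def rel_def)

lemma iso_lposet_alt: "iso_lposet P Q \<longleftrightarrow> (\<exists>f. bij_betw f (car P) (car Q) \<and>
   (\<forall>x\<in>car P. \<forall>y\<in>car P. (x, y) \<in> rel P \<longleftrightarrow> (f x, f y) \<in> rel Q) \<and>
   (\<forall>x\<in>car P. lab Q (f x) = lab P x))"
  by (cases P; cases Q) (auto simp: iso_lposet_def car_def rel_def lab_def)

lemma du_car: "car (disj_union b P Q) = ev ` car P \<union> od ` car Q"
  by (cases P; cases Q) (simp add: disj_union_def car_def ev_def[abs_def] od_def[abs_def])
lemma du_rel: "rel (disj_union b P Q) = {(ev x, ev y) |x y. (x, y) \<in> rel P} \<union> {(od x, od y) |x y. (x, y) \<in> rel Q}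
   \<union> (if b then {(ev x, od y) |x y. x \<in> car P \<and> y \<in> car Q} else {})"
  by (cases P; cases Q) (simp add: disj_union_def car_def rel_def ev_def od_def)
lemma du_lab: "lab (disj_union b P Q) (ev x) = lab P x" "lab (disj_union b P Q) (od x) = lab Q x"
  by (cases P; cases Q; simp add: disj_union_def lab_def ev_def od_def)+

lemma du_rel_simps[simp]:
  "(ev x, ev y) \<in> rel (disj_union b P Q) \<longleftrightarrow> (x, y) \<in> rel P"
  "(od x, od y) \<in> rel (disj_union b P Q) \<longleftrightarrow> (x, y) \<in> rel Q"
  "(ev x, od y) \<in> rel (disj_union b P Q) \<longleftrightarrow> b \<and> x \<in> car P \<and> y \<in> car Q"
  "(od x, ev y) \<notin> rel (disj_union b P Q)"
  by (auto simp: du_rel)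

lemma du_car_simps[simp]:
  "ev x \<in> car (disj_union b P Q) \<longleftrightarrow> x \<in> car P"
  "od x \<in> car (disj_union b P Q) \<longleftrightarrow> x \<in> car Q"
  by (auto simp: du_car)

lemma du_car_cases:
  assumes "n \<in> car (disj_union b P Q)"
  obtains x where "n = ev x" "x \<in> car P" | y where "n = od y" "y \<in> car Q"
  using assms by (auto simp: du_car)

lemma du_rel_cases:
  assumes "(n, k) \<in> rel (disj_union b P Q)"
  obtains x y where "n = ev x" "k = ev y" "(x,y) \<in> rel P"
   | x y where "n = od x" "k = od y" "(x,y) \<in> rel Q"
   | x y where "n = ev x" "k = od y" "b" "x \<in> car P" "y \<in> car Q"
  using assms by (auto simp: du_rel split: if_splits)

lemma du_wf:
  assumes "wf_lposet P" "wf_lposet Q" shows "wf_lposet (disj_union b P Q)"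
proof -
  have fin: "finite (car (disj_union b P Q))" using assms by (simp add: du_car wf_lposet_alt)
  have sub: "rel (disj_union b P Q) \<subseteq> car (disj_union b P Q) \<times> car (disj_union b P Q)"
    using assms unfolding wf_lposet_alt by (auto elim!: du_rel_cases)
  have refl: "refl_on (car (disj_union b P Q)) (rel (disj_union b P Q))"
    using assms unfolding wf_lposet_alt refl_on_def by (auto elim!: du_car_cases)
  have anti: "antisym (rel (disj_union b P Q))"
    using assms unfolding wf_lposet_alt antisym_def
    by (auto elim!: du_rel_cases)
  have tr: "trans (rel (disj_union b P Q))"
    unfolding trans_def
  proof (intro allI impI)
    fix x y z assume "(x, y) \<in> rel (disj_union b P Q)" "(y, z) \<in> rel (disj_union b P Q)"
    then show "(x, z) \<in> rel (disj_union b P Q)"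
      using assms unfolding wf_lposet_alt trans_def
      by (auto elim!: du_rel_cases)
  qed
  show ?thesis using fin sub refl anti tr by (simp add: wf_lposet_alt)
qed


lemma iso_refl: "iso_lposet P P"
  unfolding iso_lposet_alt by (rule exI[of _ id]) auto

lemma iso_sym: assumes "iso_lposet P Q" shows "iso_lposet Q P"
proof -
  from assms obtain f where f: "bij_betw f (car P) (car Q)"
    "\<forall>x\<in>car P. \<forall>y\<in>car P. (x, y) \<in> rel P \<longleftrightarrow> (f x, f y) \<in> rel Q"
    "\<forall>x\<in>car P. lab Q (f x) = lab P x" unfolding iso_lposet_alt by blast
  define g where "g = inv_into (car P) f"
  have g: "bij_betw g (car Q) (car P)" using f(1) by (simp add: g_def bij_betw_inv_into)
  have fg: "\<And>y. y \<in> car Q \<Longrightarrow> f (g y) = y" using f(1) unfolding g_def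
    by (simp add: bij_betw_inv_into_right)
  have gin: "\<And>y. y \<in> car Q \<Longrightarrow> g y \<in> car P" using g by (meson bij_betwE)
  show ?thesis unfolding iso_lposet_alt
  proof (intro exI conjI ballI)
    show "bij_betw g (car Q) (car P)" by fact
    fix x y assume "x \<in> car Q" "y \<in> car Q"
    then show "(x, y) \<in> rel Q \<longleftrightarrow> (g x, g y) \<in> rel P" using f(2) gin fg by metis
  next
    fix x assume "x \<in> car Q" then show "lab P (g x) = lab Q x" using f(3) gin fg by metis
  qed
qed

lemma iso_trans: assumes "iso_lposet P Q" "iso_lposet Q R" shows "iso_lposet P R"
proof -
  from assms obtain f where f: "bij_betw f (car P) (car Q)"
    "\<forall>x\<in>car P. \<forall>y\<in>car P. (x, y) \<in> rel P \<longleftrightarrow> (f x, f y) \<in> rel Q"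
    "\<forall>x\<in>car P. lab Q (f x) = lab P x" unfolding iso_lposet_alt by blast
  from assms obtain g where g: "bij_betw g (car Q) (car R)"
    "\<forall>x\<in>car Q. \<forall>y\<in>car Q. (x, y) \<in> rel Q \<longleftrightarrow> (g x, g y) \<in> rel R"
    "\<forall>x\<in>car Q. lab R (g x) = lab Q x" unfolding iso_lposet_alt by blast
  have fin: "\<And>x. x \<in> car P \<Longrightarrow> f x \<in> car Q" using f(1) by (meson bij_betwE)
  show ?thesis unfolding iso_lposet_alt
  proof (intro exI conjI ballI)
    show "bij_betw (g \<circ> f) (car P) (car R)" using bij_betw_trans[OF f(1) g(1)] .
    fix x y assume "x \<in> car P" "y \<in> car P"
    then show "(x, y) \<in> rel P \<longleftrightarrow> ((g \<circ> f) x, (g \<circ> f) y) \<in> rel R"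
      using f(2) g(2) fin by simp
  next
    fix x assume "x \<in> car P" then show "lab R ((g \<circ> f) x) = lab P x"
      using f(3) g(3) fin by simp
  qed
qed

lemma iso_class_eq: assumes "wf_lposet P" "wf_lposet Q"
  shows "iso_class P = iso_class Q \<longleftrightarrow> iso_lposet P Q"
proof
  assume "iso_class P = iso_class Q"
  moreover have "Q \<in> iso_class Q" using assms iso_refl by (simp add: iso_class_def)
  ultimately have "Q \<in> iso_class P" by simp
  then show "iso_lposet P Q" by (simp add: iso_class_def)
next
  assume "iso_lposet P Q"
  then show "iso_class P = iso_class Q" unfolding iso_class_def
    using iso_sym iso_trans by blast
qed

lemma pomset_of_eq: assumes "wf_lposet P" "wf_lposet Q"
  shows "pomset_of P = pomset_of Q \<longleftrightarrow> iso_lposet P Q"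
proof -
  have "iso_class P \<in> {C. \<exists>P. wf_lposet P \<and> C = iso_class P}"
       "iso_class Q \<in> {C. \<exists>P. wf_lposet P \<and> C = iso_class P}" using assms by blast+
  then show ?thesis unfolding pomset_of_def using assms
    by (simp add: Abs_pomset_inject iso_class_eq)
qed

lemma rep_props: "wf_lposet (rep_lposet U) \<and> pomset_of (rep_lposet U) = U"
proof -
  obtain P where P: "wf_lposet P" "Rep_pomset U = iso_class P" using Rep_pomset[of U] by auto
  have "P \<in> Rep_pomset U" using P iso_refl by (simp add: iso_class_def)
  then have "rep_lposet U \<in> Rep_pomset U" unfolding rep_lposet_def by (rule someI)
  then have w: "wf_lposet (rep_lposet U)" "iso_lposet P (rep_lposet U)" using P by (auto simp: iso_class_def)
  then have "iso_class (rep_lposet U) = iso_class P" using P iso_class_eq by blast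
  then have "pomset_of (rep_lposet U) = Abs_pomset (Rep_pomset U)" using P by (simp add: pomset_of_def)
  then show ?thesis using w Rep_pomset_inverse by simp
qed

lemma rep_iso: "wf_lposet P \<Longrightarrow> iso_lposet P (rep_lposet (pomset_of P))"
  using rep_props[of "pomset_of P"] pomset_of_eq by metis

lemma du_iso:
  assumes "iso_lposet P P'" "iso_lposet Q Q'"
  shows "iso_lposet (disj_union b P Q) (disj_union b P' Q')"
proof -
  from assms obtain f where f: "bij_betw f (car P) (car P')"
    "\<forall>x\<in>car P. \<forall>y\<in>car P. (x, y) \<in> rel P \<longleftrightarrow> (f x, f y) \<in> rel P'"
    "\<forall>x\<in>car P. lab P' (f x) = lab P x" unfolding iso_lposet_alt by blast
  from assms obtain g where g: "bij_betw g (car Q) (car Q')"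
    "\<forall>x\<in>car Q. \<forall>y\<in>car Q. (x, y) \<in> rel Q \<longleftrightarrow> (g x, g y) \<in> rel Q'"
    "\<forall>x\<in>car Q. lab Q' (g x) = lab Q x" unfolding iso_lposet_alt by blast
  define h where "h n = (if even n then ev (f (n div 2)) else od (g (n div 2)))" for n
  have h1[simp]: "h (ev x) = ev (f x)" "h (od x) = od (g x)" for x
    by (auto simp: h_def ev_def od_def)
  have fi: "f x \<in> car P'" if "x \<in> car P" for x using f(1) that by (meson bij_betwE)
  have gi: "g x \<in> car Q'" if "x \<in> car Q" for x using g(1) that by (meson bij_betwE)
  have finj: "inj_on f (car P)" "inj_on g (car Q)" using f(1) g(1) bij_betw_def by auto
  have bij: "bij_betw h (car (disj_union b P Q)) (car (disj_union b P' Q'))"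
    unfolding bij_betw_def
  proof
    show "inj_on h (car (disj_union b P Q))"
      unfolding inj_on_def
    proof (intro ballI impI)
      fix x y assume "x \<in> car (disj_union b P Q)" "y \<in> car (disj_union b P Q)" "h x = h y"
      then show "x = y"
        by (elim du_car_cases) (auto dest: inj_onD[OF finj(1)] inj_onD[OF finj(2)])
    qed
    have "h ` car (disj_union b P Q) = ev ` (f ` car P) \<union> od ` (g ` car Q)"
      by (simp add: du_car image_Un image_image)
    also have "\<dots> = car (disj_union b P' Q')" using f(1) g(1) by (simp add: bij_betw_def du_car)
    finally show "h ` car (disj_union b P Q) = car (disj_union b P' Q')" .
  qed
  show ?thesis unfolding iso_lposet_alt
  proof (intro exI conjI ballI)
    show "bij_betw h (car (disj_union b P Q)) (car (disj_union b P' Q'))" by fact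
    fix x y assume "x \<in> car (disj_union b P Q)" "y \<in> car (disj_union b P Q)"
    then show "(x, y) \<in> rel (disj_union b P Q) \<longleftrightarrow> (h x, h y) \<in> rel (disj_union b P' Q')"
      using f(2) g(2) fi gi by (elim du_car_cases) simp_all
  next
    fix x assume "x \<in> car (disj_union b P Q)"
    then show "lab (disj_union b P' Q') (h x) = lab (disj_union b P Q) x"
      using f(3) g(3) by (elim du_car_cases) (simp_all add: du_lab)
  qed
qed

lemma pom_op_of:
  assumes "wf_lposet P" "wf_lposet Q"
  shows "pomset_of (disj_union b (rep_lposet (pomset_of P)) (rep_lposet (pomset_of Q))) = pomset_of (disj_union b P Q)"
  using assms du_wf rep_props rep_iso du_iso iso_sym pomset_of_eq by metis

lemma pom_seq_of: "wf_lposet P \<Longrightarrow> wf_lposet Q \<Longrightarrow> pom_seq (pomset_of P) (pomset_of Q) = pomset_of (disj_union True P Q)"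
  unfolding pom_seq_def by (rule pom_op_of)
lemma pom_par_of: "wf_lposet P \<Longrightarrow> wf_lposet Q \<Longrightarrow> pom_par (pomset_of P) (pomset_of Q) = pomset_of (disj_union False P Q)"
  unfolding pom_par_def by (rule pom_op_of)


lemma iso_by_map:
  assumes "inj_on h (car P)" "h ` car P = car Q"
    "\<And>x y. x \<in> car P \<Longrightarrow> y \<in> car P \<Longrightarrow> (x, y) \<in> rel P \<longleftrightarrow> (h x, h y) \<in> rel Q"
    "\<And>x. x \<in> car P \<Longrightarrow> lab Q (h x) = lab P x"
  shows "iso_lposet P Q"
  unfolding iso_lposet_alt bij_betw_def using assms by blast

definition E0 :: "'a lposet" where "E0 = ({}, {}, (\<lambda>_. undefined))"
lemma E0_simps[simp]: "car E0 = {}" "rel E0 = {}" "wf_lposet E0"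
  by (auto simp: E0_def car_def rel_def wf_lposet_def refl_on_def antisym_def trans_def)
lemma pom_one_E0: "pom_one = pomset_of E0" by (simp add: pom_one_def E0_def)

lemma div2_simps[simp]: "ev x div 2 = x" "od x div 2 = x" by (auto simp: ev_def od_def)

lemma iso_unit_r: "iso_lposet (disj_union b P E0) P"
  by (rule iso_by_map[of "\<lambda>n. n div 2"]) (auto simp: du_car du_lab inj_on_def image_image elim!: du_car_cases)

lemma iso_unit_l: "iso_lposet (disj_union b E0 P) P"
  by (rule iso_by_map[of "\<lambda>n. n div 2"]) (auto simp: du_car du_lab inj_on_def image_image elim!: du_car_cases)

definition hswap :: "nat \<Rightarrow> nat" where "hswap n = (if even n then n + 1 else n - 1)"
lemma hswap_simps[simp]: "hswap (ev x) = od x" "hswap (od x) = ev x" by (auto simp: hswap_def ev_def od_def)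

lemma iso_comm: "iso_lposet (disj_union False P Q) (disj_union False Q P)"
proof (rule iso_by_map[of hswap])
  show "inj_on hswap (car (disj_union False P Q))"
    unfolding inj_on_def by (auto elim!: du_car_cases)
  show "hswap ` car (disj_union False P Q) = car (disj_union False Q P)"
    by (auto simp: du_car image_Un image_image)
qed (auto elim!: du_car_cases simp: du_lab)

definition hassoc :: "nat \<Rightarrow> nat" where
  "hassoc n = (if n mod 4 = 0 then n div 2 else if n mod 4 = 2 then n - 1 else 2 * n + 1)"
lemma hassoc_simps[simp]: "hassoc (ev (ev x)) = ev x" "hassoc (ev (od x)) = od (ev x)"
  "hassoc (od x) = od (od x)"
  by (auto simp: hassoc_def ev_def od_def) presburger+

lemma iso_assoc: "iso_lposet (disj_union b (disj_union b P Q) R) (disj_union b P (disj_union b Q R))"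
proof (rule iso_by_map[of hassoc])
  show "inj_on hassoc (car (disj_union b (disj_union b P Q) R))"
    unfolding inj_on_def by (auto elim!: du_car_cases)
  show "hassoc ` car (disj_union b (disj_union b P Q) R) = car (disj_union b P (disj_union b Q R))"
    by (auto simp: du_car image_Un image_image)
qed (auto elim!: du_car_cases simp: du_lab)

lemma rep_wf[simp]: "wf_lposet (rep_lposet U)" using rep_props by blast
lemma U_rep: "U = pomset_of (rep_lposet U)" using rep_props by metis

lemma seq_unit_r[simp]: "pom_seq U pom_one = U"
proof -
  have "pom_seq U pom_one = pomset_of (disj_union True (rep_lposet U) E0)"
    by (subst U_rep[of U]) (simp add: pom_one_E0 pom_seq_of)
  also have "\<dots> = U" by (subst (2) U_rep[of U]) (simp add: pomset_of_eq du_wf iso_unit_r)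
  finally show ?thesis .
qed

lemma seq_unit_l[simp]: "pom_seq pom_one U = U"
proof -
  have "pom_seq pom_one U = pomset_of (disj_union True E0 (rep_lposet U))"
    by (subst U_rep[of U]) (simp add: pom_one_E0 pom_seq_of)
  also have "\<dots> = U" by (subst (2) U_rep[of U]) (simp add: pomset_of_eq du_wf iso_unit_l)
  finally show ?thesis .
qed

lemma par_unit_r[simp]: "pom_par U pom_one = U"
proof -
  have "pom_par U pom_one = pomset_of (disj_union False (rep_lposet U) E0)"
    by (subst U_rep[of U]) (simp add: pom_one_E0 pom_par_of)
  also have "\<dots> = U" by (subst (2) U_rep[of U]) (simp add: pomset_of_eq du_wf iso_unit_r)
  finally show ?thesis .
qed

lemma par_comm: "pom_par U V = pom_par V U"
  unfolding pom_par_def by (simp add: pomset_of_eq du_wf iso_comm)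

lemma seq_assoc: "pom_seq (pom_seq U V) W = pom_seq U (pom_seq V W)"
proof -
  have e1: "pom_seq U V = pomset_of (disj_union True (rep_lposet U) (rep_lposet V))" by (simp add: pom_seq_def)
  have e2: "pom_seq V W = pomset_of (disj_union True (rep_lposet V) (rep_lposet W))" by (simp add: pom_seq_def)
  have "pom_seq (pom_seq U V) W = pom_seq (pomset_of (disj_union True (rep_lposet U) (rep_lposet V))) (pomset_of (rep_lposet W))"
    by (simp only: e1 U_rep[symmetric])
  also have "\<dots> = pomset_of (disj_union True (disj_union True (rep_lposet U) (rep_lposet V)) (rep_lposet W))"
    by (simp add: pom_seq_of du_wf)
  also have "\<dots> = pomset_of (disj_union True (rep_lposet U) (disj_union True (rep_lposet V) (rep_lposet W)))"
    by (simp add: pomset_of_eq du_wf iso_assoc)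
  also have "\<dots> = pom_seq (pomset_of (rep_lposet U)) (pomset_of (disj_union True (rep_lposet V) (rep_lposet W)))"
    by (simp add: pom_seq_of du_wf)
  also have "\<dots> = pom_seq U (pom_seq V W)"
    by (simp only: e2 U_rep[symmetric])
  finally show ?thesis .
qed



lemma mset_single: "mset (map fst xs) = {#c#} \<Longrightarrow> \<exists>U. xs = [(c, U)]"
  by (cases xs) auto

lemma mset_pair: "mset (map fst xs) = {#a, b#} \<Longrightarrow> \<exists>U V. xs = [(a, U), (b, V)] \<or> xs = [(b, V), (a, U)]"
proof -
  assume h: "mset (map fst xs) = {#a, b#}"
  then have "size (mset (map fst xs)) = size {#a, b#}" by simp
  then have "length xs = 2" by simp
  then obtain x1 x2 where xs: "xs = [x1, x2]"
    by (auto simp: length_Suc_conv numeral_2_eq_2)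
  then have "{#fst x1, fst x2#} = {#a, b#}" using h by simp
  then have "(fst x1 = a \<and> fst x2 = b) \<or> (fst x1 = b \<and> fst x2 = a)"
    by (auto simp: add_eq_conv_ex)
  then show ?thesis using xs by (cases x1; cases x2) auto
qed


fun child :: "'a sr_exp \<Rightarrow> nat \<Rightarrow> 'a sr_exp option" where
  "child (SPlus e f) k = (if k = 0 then Some e else if k = 1 then Some f else None)"
| "child (SSeq e f) k = (if k = 0 then Some e else if k = 1 then Some f else None)"
| "child (SPar e f) k = (if k = 0 then Some e else if k = 1 then Some f else None)"
| "child (SStar e) k = (if k = 0 then Some e else None)"
| "child _ k = None"

fun subexp :: "'a sr_exp \<Rightarrow> nat list \<Rightarrow> 'a sr_exp option" where
  "subexp e [] = Some e"
| "subexp e (k # p) = (case child e k of None \<Rightarrow> None | Some c \<Rightarrow> subexp c p)"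

lemma subexp_append: "subexp e (p @ q) = (case subexp e p of None \<Rightarrow> None | Some c \<Rightarrow> subexp c q)"
  by (induction p arbitrary: e) (auto split: option.split)

lemma subexp_child: "subexp e0 p = Some e \<Longrightarrow> subexp e0 (p @ [k]) = child e k"
  by (simp add: subexp_append split: option.split)

lemma child_size: "child e k = Some c \<Longrightarrow> size c < size e \<and> k \<le> 1"
  by (cases e) (auto split: if_splits)

lemma subexp_bound: "subexp e p \<noteq> None \<Longrightarrow> length p \<le> size e \<and> set p \<subseteq> {0, 1}"
proof (induction p arbitrary: e)
  case Nil then show ?case by simp
next
  case (Cons k p)
  then obtain c where c: "child e k = Some c" "subexp c p \<noteq> None" by (auto split: option.splits)
  with Cons.IH[of c] child_size[OF c(1)] show ?case by auto
qed

lemma finite_paths: "finite {p. subexp e p \<noteq> None}"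
proof (rule finite_subset)
  show "{p. subexp e p \<noteq> None} \<subseteq> {xs. set xs \<subseteq> {0, 1} \<and> length xs \<le> size e}"
    using subexp_bound by blast
  show "finite {xs. set xs \<subseteq> {0::nat, 1} \<and> length xs \<le> size e}"
    by (rule finite_lists_length_le) simp
qed

definition enc :: "nat list \<Rightarrow> nat \<Rightarrow> nat" where "enc p i = prod_encode (list_encode p, i)"
definition pth :: "nat \<Rightarrow> nat list" where "pth n = list_decode (fst (prod_decode n))"
definition tg :: "nat \<Rightarrow> nat" where "tg n = snd (prod_decode n)"

lemma pth_enc[simp]: "pth (enc p i) = p" and tg_enc[simp]: "tg (enc p i) = i"
  by (simp_all add: pth_def tg_def enc_def)
lemma enc_pth_tg: "enc (pth n) (tg n) = n"
  by (simp add: pth_def tg_def enc_def)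
lemma enc_inj[simp]: "enc p i = enc q j \<longleftrightarrow> p = q \<and> i = j"
  by (metis pth_enc tg_enc)

fun acc :: "'a sr_exp \<Rightarrow> nat \<Rightarrow> bool" where
  "acc SOne i = (i = 0)"
| "acc (SSym a) i = (i = 1)"
| "acc (SPlus e f) i = (i = 1)"
| "acc (SSeq e f) i = (i = 2)"
| "acc (SPar e f) i = (i = 1)"
| "acc (SStar e) i = (i = 0)"
| "acc SZero i = False"

lemma acc_lt: "acc e i \<Longrightarrow> i < 3" by (cases e) auto

fun gam :: "'a sr_exp option \<Rightarrow> nat list \<Rightarrow> nat \<Rightarrow> nat multiset \<Rightarrow> nat set" where
  "gam (Some (SPlus e f)) p i \<phi> = (if i = 0 \<and> (\<phi> = {#enc (p @ [0]) 0#} \<or> \<phi> = {#enc (p @ [1]) 0#}) then {enc p 1} else {})"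
| "gam (Some (SSeq e f)) p i \<phi> = (if i = 0 \<and> \<phi> = {#enc (p @ [0]) 0#} then {enc p 1}
     else if i = 1 \<and> \<phi> = {#enc (p @ [1]) 0#} then {enc p 2} else {})"
| "gam (Some (SPar e f)) p i \<phi> = (if i = 0 \<and> \<phi> = {#enc (p @ [0]) 0, enc (p @ [1]) 0#} then {enc p 1} else {})"
| "gam (Some (SStar e)) p i \<phi> = (if i = 0 \<and> \<phi> = {#enc (p @ [0]) 0#} then {enc p 0} else {})"
| "gam _ p i \<phi> = {}"

fun del :: "'a sr_exp option \<Rightarrow> nat list \<Rightarrow> nat \<Rightarrow> 'a \<Rightarrow> nat set" where
  "del (Some (SSym b)) p i a = (if i = 0 \<and> a = b then {enc p 1} else {})"
| "del _ p i a = {}"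

definition aut :: "'a sr_exp \<Rightarrow> (nat, 'a) pomset_automaton" where
  "aut e0 = \<lparr>states = {enc p i | p i. subexp e0 p \<noteq> None \<and> i < 3},
     accepting = {enc p i | p i e. subexp e0 p = Some e \<and> acc e i},
     delta = (\<lambda>n a. del (subexp e0 (pth n)) (pth n) (tg n) a),
     gamma = (\<lambda>n \<phi>. gam (subexp e0 (pth n)) (pth n) (tg n) \<phi>)\<rparr>"

lemma aut_simps[simp]:
  "delta (aut e0) (enc p i) a = del (subexp e0 p) p i a"
  "gamma (aut e0) (enc p i) \<phi> = gam (subexp e0 p) p i \<phi>"
  "enc p i \<in> accepting (aut e0) \<longleftrightarrow> (\<exists>e. subexp e0 p = Some e \<and> acc e i)"
  "enc p i \<in> states (aut e0) \<longleftrightarrow> subexp e0 p \<noteq> None \<and> i < 3"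
  by (auto simp: aut_def)

lemma del_props: "m \<in> del ox p i a \<Longrightarrow> ox \<noteq> None \<and> i = 0 \<and> m = enc p 1"
  by (cases "(ox, p, i, a)" rule: del.cases) (auto split: if_splits)

lemma gam_props: "m \<in> gam ox p i \<phi> \<Longrightarrow> ox \<noteq> None \<and> i < 3 \<and> (\<exists>j < 3. m = enc p j)"
  by (cases "(ox, p, i, \<phi>)" rule: gam.cases) (auto split: if_splits)

lemma fork_helper: "(i::nat) < 3 \<Longrightarrow> subexp e0 p = Some e \<Longrightarrow> r = enc (p @ [k]) 0 \<Longrightarrow> child e k \<noteq> None \<Longrightarrow>
   i < 3 \<and> subexp e0 p \<noteq> None \<and> (\<exists>k. r = enc (p @ [k]) 0 \<and> subexp e0 (p @ [k]) \<noteq> None)"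
  using subexp_child[of e0 p e k] by auto

lemma gam_fork: "gam (subexp e0 p) p i \<phi> \<noteq> {} \<Longrightarrow> r \<in># \<phi> \<Longrightarrow>
   i < 3 \<and> subexp e0 p \<noteq> None \<and> (\<exists>k. r = enc (p @ [k]) 0 \<and> subexp e0 (p @ [k]) \<noteq> None)"
proof -
  assume ne: "gam (subexp e0 p) p i \<phi> \<noteq> {}" and r: "r \<in># \<phi>"
  then obtain e where e: "subexp e0 p = Some e" by (cases "subexp e0 p") auto
  have ne': "gam (Some e) p i \<phi> \<noteq> {}" using ne e by simp
  have "\<exists>k. r = enc (p @ [k]) 0 \<and> child e k \<noteq> None"
  proof (cases e)
    case (SPlus e1 e2)
    then have "r = enc (p @ [0]) 0 \<or> r = enc (p @ [1]) 0" using ne' r by (simp split: if_splits) auto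
    then show ?thesis using SPlus by (metis child.simps(1) option.distinct(1) zero_neq_one)
  next
    case (SSeq e1 e2)
    then have "r = enc (p @ [0]) 0 \<or> r = enc (p @ [1]) 0" using ne' r by (simp split: if_splits)
    then show ?thesis using SSeq by (metis child.simps(2) option.distinct(1) zero_neq_one)
  next
    case (SPar e1 e2)
    then have "r = enc (p @ [0]) 0 \<or> r = enc (p @ [1]) 0" using ne' r by (simp split: if_splits)
    then show ?thesis using SPar by (metis child.simps(3) option.distinct(1) zero_neq_one)
  next
    case (SStar e1)
    then have "r = enc (p @ [0]) 0" using ne' r by (simp split: if_splits)
    then show ?thesis using SStar by (metis child.simps(4) option.distinct(1))
  qed (use ne' in simp_all)
  moreover have "i < 3" using ne' by (cases e) (simp_all split: if_splits)
  ultimately show ?thesis using fork_helper e by blast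
qed

lemma gam_finite: "finite {\<phi>. gam ox p i \<phi> \<noteq> {}}"
proof (rule finite_subset)
  show "{\<phi>. gam ox p i \<phi> \<noteq> {}} \<subseteq> {{#enc (p @ [0]) 0#}, {#enc (p @ [1]) 0#}, {#enc (p @ [0]) 0, enc (p @ [1]) 0#}}"
  proof
    fix \<phi> assume "\<phi> \<in> {\<phi>. gam ox p i \<phi> \<noteq> {}}"
    then show "\<phi> \<in> {{#enc (p @ [0]) 0#}, {#enc (p @ [1]) 0#}, {#enc (p @ [0]) 0, enc (p @ [1]) 0#}}"
      by (cases "(ox, p, i, \<phi>)" rule: gam.cases) (simp_all split: if_splits, blast)
  qed
qed simp


lemma delta_aut: "delta (aut e0) q a = del (subexp e0 (pth q)) (pth q) (tg q) a" by (simp add: aut_def)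
lemma gamma_aut: "gamma (aut e0) q \<phi> = gam (subexp e0 (pth q)) (pth q) (tg q) \<phi>" by (simp add: aut_def)
lemma states_aut: "q \<in> states (aut e0) \<longleftrightarrow> subexp e0 (pth q) \<noteq> None \<and> tg q < 3"
  by (metis aut_simps(4) enc_pth_tg)

lemma wf_aut: "wf_pa (aut e0)"
  unfolding wf_pa_def
proof (intro conjI allI impI)
  show "accepting (aut e0) \<subseteq> states (aut e0)" by (auto simp: aut_def dest: acc_lt)
next
  fix q a show "delta (aut e0) q a \<subseteq> states (aut e0)"
    by (auto simp: delta_aut states_aut dest!: del_props)
next
  fix q a assume "q \<notin> states (aut e0)" then show "delta (aut e0) q a = {}"
    by (auto simp: delta_aut states_aut dest!: del_props)
next
  fix q \<phi> show "gamma (aut e0) q \<phi> \<subseteq> states (aut e0)"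
  proof
    fix m assume "m \<in> gamma (aut e0) q \<phi>"
    then have "subexp e0 (pth q) \<noteq> None \<and> tg q < 3 \<and> (\<exists>j<3. m = enc (pth q) j)"
      by (simp add: gamma_aut gam_props)
    then show "m \<in> states (aut e0)" by auto
  qed
next
  fix q \<phi> assume ne: "gamma (aut e0) q \<phi> \<noteq> {}"
  show "q \<in> states (aut e0)" using gam_fork[of e0 "pth q" "tg q" \<phi>] ne gam_props
    by (metis equals0I gamma_aut states_aut)
  show "set_mset \<phi> \<subseteq> states (aut e0)"
  proof
    fix r assume "r \<in># \<phi>"
    then obtain k where "r = enc (pth q @ [k]) 0" "subexp e0 (pth q @ [k]) \<noteq> None"
      using gam_fork[of e0 "pth q" "tg q" \<phi> r] ne by (auto simp: gamma_aut)
    then show "r \<in> states (aut e0)" by simp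
  qed
next
  fix q show "finite {\<phi>. gamma (aut e0) q \<phi> \<noteq> {}}" by (simp add: gamma_aut gam_finite)
qed

lemma finite_aut: "finite_pa (aut e0)"
proof -
  have "states (aut e0) = (\<lambda>(p, i). enc p i) ` ({p. subexp e0 p \<noteq> None} \<times> {..<3})"
    by (auto simp: aut_def)
  then show ?thesis unfolding finite_pa_def
    by (metis finite_paths finite_imageI finite_cartesian_product finite_lessThan)
qed

lemma step_len: "support_step (aut e0) m n \<Longrightarrow> length (pth n) \<le> length (pth m)"
  unfolding support_step_def
proof (elim disjE exE)
  fix a assume "m \<in> delta (aut e0) n a" then show ?thesis by (auto simp: delta_aut dest!: del_props)
next
  fix \<phi> assume "m \<in> gamma (aut e0) n \<phi>" then show ?thesis by (auto simp: gamma_aut dest!: gam_props)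
next
  fix \<phi> assume "m \<in># \<phi> \<and> gamma (aut e0) n \<phi> \<noteq> {}"
  then show ?thesis using gam_fork[of e0 "pth n" "tg n" \<phi> m] by (auto simp: gamma_aut)
qed

lemma supports_len: "supports (aut e0) q r \<Longrightarrow> length (pth r) \<le> length (pth q)"
  unfolding supports_def
proof (induction rule: rtranclp_induct)
  case base then show ?case by simp
next
  case (step y z) then show ?case using step_len[of e0 y z] by simp
qed

lemma fa_aut: "fork_acyclic (aut e0)"
  unfolding fork_acyclic_def
proof (intro allI impI notI)
  fix q \<phi> r assume h: "r \<in># \<phi> \<and> gamma (aut e0) q \<phi> \<noteq> {}" and s: "supports (aut e0) q r"
  then obtain k where "r = enc (pth q @ [k]) 0"
    using gam_fork[of e0 "pth q" "tg q" \<phi> r] by (auto simp: gamma_aut)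
  then show False using supports_len[OF s] by simp
qed


lemma par_list1[simp]: "pom_par_list [U] = U" by (simp add: pom_par_list_def)
lemma par_list2[simp]: "pom_par_list [U, V] = pom_par U V" by (simp add: pom_par_list_def)

lemma run_call: "y \<in> gamma A x {#c#} \<Longrightarrow> U \<in> lang_pa A c \<Longrightarrow> run A x U y"
  using run_par[of y A x "[(c, U)]"] by (auto simp: lang_pa_def)

lemma run_call2: "y \<in> gamma A x {#c, d#} \<Longrightarrow> U \<in> lang_pa A c \<Longrightarrow> V \<in> lang_pa A d \<Longrightarrow> run A x (pom_par U V) y"
  using run_par[of y A x "[(c, U), (d, V)]"] by (auto simp: lang_pa_def)

lemma run_inv:
  assumes "run A x U y" "x = enc p i"
    and one: "\<And>i. R i pom_one i"
    and seq: "\<And>i j k U V. R i U j \<Longrightarrow> R j V k \<Longrightarrow> R i (pom_seq U V) k"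
    and atom: "\<And>i a y. y \<in> delta A (enc p i) a \<Longrightarrow> \<exists>j. y = enc p j \<and> R i (pom_atom a) j"
    and par: "\<And>i xs y. y \<in> gamma A (enc p i) (mset (map fst xs)) \<Longrightarrow> \<forall>(q, U) \<in> set xs. U \<in> lang_pa A q
       \<Longrightarrow> \<exists>j. y = enc p j \<and> R i (pom_par_list (map snd xs)) j"
  shows "\<exists>j. y = enc p j \<and> R i U j"
  using assms(1,2)
proof (induction arbitrary: i rule: run.induct)
  case (run_one q)
  then show ?case using one[of i] by blast
next
  case (run_atom q' q a)
  then show ?case using atom[where i=i and a=a and y=q'] by blast
next
  case (run_seq q U q'' V q')
  obtain j where j: "q'' = enc p j" "R i U j" using run_seq.IH(1)[OF run_seq.prems] by blast
  obtain k where k: "q' = enc p k" "R j V k" using run_seq.IH(2)[OF j(1)] by blast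
  show ?case using k(1) seq[OF j(2) k(2)] by blast
next
  case (run_par q' q xs)
  have "\<forall>(qi, Ui) \<in> set xs. Ui \<in> lang_pa A qi" using run_par.IH by (force simp: lang_pa_def)
  then show ?case using par[where i=i and xs=xs and y=q'] run_par.hyps(1) run_par.prems by blast
qed

lemma lang_sub:
  assumes "subexp e0 p = Some e"
    and "\<And>U y. run (aut e0) (enc p 0) U y \<Longrightarrow> \<exists>j. y = enc p j \<and> R 0 U j"
    and "\<And>U j. R 0 U j \<Longrightarrow> acc e j \<Longrightarrow> U \<in> S"
  shows "lang_pa (aut e0) (enc p 0) \<subseteq> S"
proof
  fix U assume "U \<in> lang_pa (aut e0) (enc p 0)"
  then obtain y where y: "y \<in> accepting (aut e0)" "run (aut e0) (enc p 0) U y" by (auto simp: lang_pa_def)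
  then obtain j where "y = enc p j" "R 0 U j" using assms(2) by blast
  moreover then have "acc e j" using y(1) assms(1) by simp
  ultimately show "U \<in> S" using assms(3) by blast
qed

lemma lang_supI: "subexp e0 p = Some e \<Longrightarrow> acc e j \<Longrightarrow> run (aut e0) (enc p 0) U (enc p j) \<Longrightarrow>
  U \<in> lang_pa (aut e0) (enc p 0)"
proof -
  assume a: "subexp e0 p = Some e" "acc e j" "run (aut e0) (enc p 0) U (enc p j)"
  then have "enc p j \<in> accepting (aut e0)" by simp
  then show ?thesis unfolding lang_pa_def using a(3) by blast
qed

lemma lang_seqI: "U \<in> L \<Longrightarrow> V \<in> M \<Longrightarrow> pom_seq U V \<in> lang_seq L M"
  unfolding lang_seq_def by blast
lemma lang_seqE: "X \<in> lang_seq L M \<Longrightarrow> (\<And>U V. X = pom_seq U V \<Longrightarrow> U \<in> L \<Longrightarrow> V \<in> M \<Longrightarrow> P) \<Longrightarrow> P"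
  unfolding lang_seq_def by blast
lemma lang_parI: "U \<in> L \<Longrightarrow> V \<in> M \<Longrightarrow> pom_par U V \<in> lang_par L M"
  unfolding lang_par_def by blast
lemma lang_parE: "X \<in> lang_par L M \<Longrightarrow> (\<And>U V. X = pom_par U V \<Longrightarrow> U \<in> L \<Longrightarrow> V \<in> M \<Longrightarrow> P) \<Longrightarrow> P"
  unfolding lang_par_def by blast

lemma pow_seq: "U \<in> lang_pow L n \<Longrightarrow> V \<in> lang_pow L m \<Longrightarrow> pom_seq U V \<in> lang_pow L (n + m)"
proof (induction n arbitrary: U)
  case 0
  then have "U = pom_one" by simp
  then show ?case using 0(2) by (simp only: seq_unit_l add_0)
next
  case (Suc n)
  from Suc.prems(1) have "U \<in> lang_seq L (lang_pow L n)" by simp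
  then obtain W U' where w: "U = pom_seq W U'" "W \<in> L" "U' \<in> lang_pow L n" by (rule lang_seqE)
  have "pom_seq U' V \<in> lang_pow L (n + m)" using Suc.IH[OF w(3) Suc.prems(2)] .
  then have "pom_seq W (pom_seq U' V) \<in> lang_pow L (Suc n + m)" using w(2) by (simp add: lang_seqI)
  moreover have "pom_seq U V = pom_seq W (pom_seq U' V)" using w(1) seq_assoc by simp
  ultimately show ?case by simp
qed

lemma star_seq: "U \<in> lang_star L \<Longrightarrow> V \<in> lang_star L \<Longrightarrow> pom_seq U V \<in> lang_star L"
proof -
  assume "U \<in> lang_star L" "V \<in> lang_star L"
  then obtain n m where "U \<in> lang_pow L n" "V \<in> lang_pow L m" unfolding lang_star_def by blast
  then have "pom_seq U V \<in> lang_pow L (n + m)" by (rule pow_seq)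
  then show ?thesis unfolding lang_star_def by blast
qed

lemma star_one: "pom_one \<in> lang_star L"
proof -
  have "pom_one \<in> lang_pow L 0" by simp
  then show ?thesis unfolding lang_star_def by blast
qed

lemma star_base: "U \<in> L \<Longrightarrow> U \<in> lang_star L"
proof -
  assume "U \<in> L"
  then have "pom_seq U pom_one \<in> lang_pow L (Suc 0)" by (simp only: lang_pow.simps lang_seqI singletonI)
  then have "U \<in> lang_pow L (Suc 0)" by (simp only: seq_unit_r)
  then show ?thesis unfolding lang_star_def by blast
qed



lemma xs_single: "mset (map fst xs) = {#c#} \<Longrightarrow> \<forall>(q, U) \<in> set xs. U \<in> lang_pa A q \<Longrightarrow>
  pom_par_list (map snd xs) \<in> lang_pa A c"
  by (drule mset_single) auto

lemma xs_pair: "mset (map fst xs) = {#c, d#} \<Longrightarrow> \<forall>(q, U) \<in> set xs. U \<in> lang_pa A q \<Longrightarrow>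
  pom_par_list (map snd xs) \<in> lang_par (lang_pa A c) (lang_pa A d)"
proof -
  assume m: "mset (map fst xs) = {#c, d#}" and l: "\<forall>(q, U) \<in> set xs. U \<in> lang_pa A q"
  from mset_pair[OF m] obtain U V where "xs = [(c, U), (d, V)] \<or> xs = [(d, V), (c, U)]" by blast
  then show ?thesis
  proof
    assume "xs = [(c, U), (d, V)]" then show ?thesis using l by (simp add: lang_parI)
  next
    assume "xs = [(d, V), (c, U)]" then show ?thesis using l by (simp add: lang_parI par_comm[of V U])
  qed
qed

lemma lang_zero: assumes s: "subexp e0 p = Some SZero" shows "lang_pa (aut e0) (enc p 0) = {}"
proof -
  have "lang_pa (aut e0) (enc p 0) \<subseteq> {}"
  proof (rule lang_sub[OF s, where R="\<lambda>i U j. j = i \<and> U = pom_one"])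
    fix U y assume r: "run (aut e0) (enc p 0) U y"
    show "\<exists>j. y = enc p j \<and> j = 0 \<and> U = pom_one"
      by (rule run_inv[where R="\<lambda>i U j. j = i \<and> U = pom_one", OF r refl]) (simp_all add: s)
  qed simp
  then show ?thesis by blast
qed

lemma lang_one: assumes s: "subexp e0 p = Some SOne" shows "lang_pa (aut e0) (enc p 0) = {pom_one}"
proof
  show "lang_pa (aut e0) (enc p 0) \<subseteq> {pom_one}"
  proof (rule lang_sub[OF s, where R="\<lambda>i U j. j = i \<and> U = pom_one"])
    fix U y assume r: "run (aut e0) (enc p 0) U y"
    show "\<exists>j. y = enc p j \<and> j = 0 \<and> U = pom_one"
      by (rule run_inv[where R="\<lambda>i U j. j = i \<and> U = pom_one", OF r refl]) (simp_all add: s)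
  qed simp
  show "{pom_one} \<subseteq> lang_pa (aut e0) (enc p 0)"
    using lang_supI[OF s, of 0 pom_one] run_one[of "aut e0" "enc p 0"] by simp
qed

lemma lang_sym: assumes s: "subexp e0 p = Some (SSym a)" shows "lang_pa (aut e0) (enc p 0) = {pom_atom a}"
proof
  let ?R = "\<lambda>(i::nat) U (j::nat). (j = i \<and> U = pom_one) \<or> (i = 0 \<and> j = 1 \<and> U = pom_atom a)"
  show "lang_pa (aut e0) (enc p 0) \<subseteq> {pom_atom a}"
  proof (rule lang_sub[OF s, where R="?R"])
    fix U y assume r: "run (aut e0) (enc p 0) U y"
    show "\<exists>j. y = enc p j \<and> ?R 0 U j"
    proof (rule run_inv[where R="?R", OF r refl])
      fix i j k U V assume "?R i U j" "?R j V k"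
      then show "?R i (pom_seq U V) k" by auto
    next
      fix i b y assume "y \<in> delta (aut e0) (enc p i) b"
      then show "\<exists>j. y = enc p j \<and> ?R i (pom_atom b) j" using s by (simp split: if_splits)
    qed (simp_all add: s)
  qed simp
  show "{pom_atom a} \<subseteq> lang_pa (aut e0) (enc p 0)"
    using lang_supI[OF s, of 1 "pom_atom a"] run_atom[of "enc p 1" "aut e0" "enc p 0" a] s by simp
qed

lemma lang_plus: assumes s: "subexp e0 p = Some (SPlus e1 e2)"
  and L0: "lang_pa (aut e0) (enc (p @ [0]) 0) = sem e1"
  and L1: "lang_pa (aut e0) (enc (p @ [1]) 0) = sem e2"
  shows "lang_pa (aut e0) (enc p 0) = sem e1 \<union> sem e2"
proof
  let ?R = "\<lambda>(i::nat) U (j::nat). (j = i \<and> U = pom_one) \<or> (i = 0 \<and> j = 1 \<and> U \<in> sem e1 \<union> sem e2)"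
  show "lang_pa (aut e0) (enc p 0) \<subseteq> sem e1 \<union> sem e2"
  proof (rule lang_sub[OF s, where R="?R"])
    fix U y assume r: "run (aut e0) (enc p 0) U y"
    show "\<exists>j. y = enc p j \<and> ?R 0 U j"
    proof (rule run_inv[where R="?R", OF r refl])
      fix i j k U V assume "?R i U j" "?R j V k"
      then show "?R i (pom_seq U V) k" by auto
    next
      fix i xs y assume y: "y \<in> gamma (aut e0) (enc p i) (mset (map fst xs))"
        and l: "\<forall>(q, U) \<in> set xs. U \<in> lang_pa (aut e0) q"
      from y s have h: "i = 0" "y = enc p 1"
        and m: "mset (map fst xs) = {#enc (p @ [0]) 0#} \<or> mset (map fst xs) = {#enc (p @ [1]) 0#}"
        by (simp_all split: if_splits)
      from m have "pom_par_list (map snd xs) \<in> sem e1 \<union> sem e2"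
      proof
        assume "mset (map fst xs) = {#enc (p @ [0]) 0#}"
        from xs_single[OF this l] show ?thesis using L0 by simp
      next
        assume "mset (map fst xs) = {#enc (p @ [1]) 0#}"
        from xs_single[OF this l] show ?thesis using L1 by simp
      qed
      then show "\<exists>j. y = enc p j \<and> ?R i (pom_par_list (map snd xs)) j" using h by simp
    qed (simp_all add: s)
  qed simp
  show "sem e1 \<union> sem e2 \<subseteq> lang_pa (aut e0) (enc p 0)"
  proof
    fix U assume "U \<in> sem e1 \<union> sem e2"
    then have "run (aut e0) (enc p 0) U (enc p 1)"
    proof
      assume "U \<in> sem e1"
      then show ?thesis using L0 s by (intro run_call[of "enc p 1" _ _ "enc (p @ [0]) 0"]) simp_all
    next
      assume "U \<in> sem e2"
      then show ?thesis using L1 s by (intro run_call[of "enc p 1" _ _ "enc (p @ [1]) 0"]) simp_all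
    qed
    then show "U \<in> lang_pa (aut e0) (enc p 0)" using lang_supI[OF s, of 1 U] by simp
  qed
qed

lemma lang_seqc: assumes s: "subexp e0 p = Some (SSeq e1 e2)"
  and L0: "lang_pa (aut e0) (enc (p @ [0]) 0) = sem e1"
  and L1: "lang_pa (aut e0) (enc (p @ [1]) 0) = sem e2"
  shows "lang_pa (aut e0) (enc p 0) = lang_seq (sem e1) (sem e2)"
proof
  let ?R = "\<lambda>(i::nat) U (j::nat). (j = i \<and> U = pom_one) \<or> (i = 0 \<and> j = 1 \<and> U \<in> sem e1)
     \<or> (i = 1 \<and> j = 2 \<and> U \<in> sem e2) \<or> (i = 0 \<and> j = 2 \<and> U \<in> lang_seq (sem e1) (sem e2))"
  show "lang_pa (aut e0) (enc p 0) \<subseteq> lang_seq (sem e1) (sem e2)"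
  proof (rule lang_sub[OF s, where R="?R"])
    fix U y assume r: "run (aut e0) (enc p 0) U y"
    show "\<exists>j. y = enc p j \<and> ?R 0 U j"
    proof (rule run_inv[where R="?R", OF r refl])
      fix i j k U V assume "?R i U j" "?R j V k"
      then show "?R i (pom_seq U V) k" by (auto intro: lang_seqI)
    next
      fix i xs y assume y: "y \<in> gamma (aut e0) (enc p i) (mset (map fst xs))"
        and l: "\<forall>(q, U) \<in> set xs. U \<in> lang_pa (aut e0) q"
      from y s have "(i = 0 \<and> y = enc p 1 \<and> mset (map fst xs) = {#enc (p @ [0]) 0#}) \<or>
          (i = 1 \<and> y = enc p 2 \<and> mset (map fst xs) = {#enc (p @ [1]) 0#})"
        by (simp split: if_splits)
      then show "\<exists>j. y = enc p j \<and> ?R i (pom_par_list (map snd xs)) j"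
      proof (elim disjE conjE)
        assume h: "i = 0" "y = enc p 1" "mset (map fst xs) = {#enc (p @ [0]) 0#}"
        from xs_single[OF h(3) l] have "pom_par_list (map snd xs) \<in> sem e1" using L0 by simp
        then show ?thesis using h by simp
      next
        assume h: "i = 1" "y = enc p 2" "mset (map fst xs) = {#enc (p @ [1]) 0#}"
        from xs_single[OF h(3) l] have "pom_par_list (map snd xs) \<in> sem e2" using L1 by simp
        then show ?thesis using h by simp
      qed
    qed (simp_all add: s)
  qed simp
  show "lang_seq (sem e1) (sem e2) \<subseteq> lang_pa (aut e0) (enc p 0)"
  proof
    fix X assume "X \<in> lang_seq (sem e1) (sem e2)"
    then obtain U V where X: "X = pom_seq U V" "U \<in> sem e1" "V \<in> sem e2" by (rule lang_seqE)
    have r1: "run (aut e0) (enc p 0) U (enc p 1)"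
      using L0 s X(2) by (intro run_call[of "enc p 1" _ _ "enc (p @ [0]) 0"]) simp_all
    have r2: "run (aut e0) (enc p 1) V (enc p 2)"
      using L1 s X(3) by (intro run_call[of "enc p 2" _ _ "enc (p @ [1]) 0"]) simp_all
    show "X \<in> lang_pa (aut e0) (enc p 0)" using lang_supI[OF s, of 2 X] run_seq[OF r1 r2] X(1) by simp
  qed
qed

lemma lang_parc: assumes s: "subexp e0 p = Some (SPar e1 e2)"
  and L0: "lang_pa (aut e0) (enc (p @ [0]) 0) = sem e1"
  and L1: "lang_pa (aut e0) (enc (p @ [1]) 0) = sem e2"
  shows "lang_pa (aut e0) (enc p 0) = lang_par (sem e1) (sem e2)"
proof
  let ?R = "\<lambda>(i::nat) U (j::nat). (j = i \<and> U = pom_one) \<or> (i = 0 \<and> j = 1 \<and> U \<in> lang_par (sem e1) (sem e2))"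
  show "lang_pa (aut e0) (enc p 0) \<subseteq> lang_par (sem e1) (sem e2)"
  proof (rule lang_sub[OF s, where R="?R"])
    fix U y assume r: "run (aut e0) (enc p 0) U y"
    show "\<exists>j. y = enc p j \<and> ?R 0 U j"
    proof (rule run_inv[where R="?R", OF r refl])
      fix i j k U V assume "?R i U j" "?R j V k"
      then show "?R i (pom_seq U V) k" by auto
    next
      fix i xs y assume y: "y \<in> gamma (aut e0) (enc p i) (mset (map fst xs))"
        and l: "\<forall>(q, U) \<in> set xs. U \<in> lang_pa (aut e0) q"
      from y s have h: "i = 0" "y = enc p 1" "mset (map fst xs) = {#enc (p @ [0]) 0, enc (p @ [1]) 0#}"
        by (simp_all split: if_splits)
      from xs_pair[OF h(3) l] have "pom_par_list (map snd xs) \<in> lang_par (sem e1) (sem e2)"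
        using L0 L1 by simp
      then show "\<exists>j. y = enc p j \<and> ?R i (pom_par_list (map snd xs)) j" using h by simp
    qed (simp_all add: s)
  qed simp
  show "lang_par (sem e1) (sem e2) \<subseteq> lang_pa (aut e0) (enc p 0)"
  proof
    fix X assume "X \<in> lang_par (sem e1) (sem e2)"
    then obtain U V where X: "X = pom_par U V" "U \<in> sem e1" "V \<in> sem e2" by (rule lang_parE)
    have r1: "run (aut e0) (enc p 0) (pom_par U V) (enc p 1)"
      using L0 L1 s X(2,3) by (intro run_call2[of "enc p 1" _ _ "enc (p @ [0]) 0" "enc (p @ [1]) 0"]) simp_all
    show "X \<in> lang_pa (aut e0) (enc p 0)" using lang_supI[OF s, of 1 X] r1 X(1) by simp
  qed
qed

lemma lang_starc: assumes s: "subexp e0 p = Some (SStar e1)"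
  and L0: "lang_pa (aut e0) (enc (p @ [0]) 0) = sem e1"
  shows "lang_pa (aut e0) (enc p 0) = lang_star (sem e1)"
proof
  let ?R = "\<lambda>(i::nat) U (j::nat). j = i \<and> (U = pom_one \<or> (i = 0 \<and> U \<in> lang_star (sem e1)))"
  show "lang_pa (aut e0) (enc p 0) \<subseteq> lang_star (sem e1)"
  proof (rule lang_sub[OF s, where R="?R"])
    fix U y assume r: "run (aut e0) (enc p 0) U y"
    show "\<exists>j. y = enc p j \<and> ?R 0 U j"
    proof (rule run_inv[where R="?R", OF r refl])
      fix i j k U V assume "?R i U j" "?R j V k"
      then show "?R i (pom_seq U V) k" by (auto intro: star_seq)
    next
      fix i xs y assume y: "y \<in> gamma (aut e0) (enc p i) (mset (map fst xs))"
        and l: "\<forall>(q, U) \<in> set xs. U \<in> lang_pa (aut e0) q"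
      from y s have h: "i = 0" "y = enc p 0" "mset (map fst xs) = {#enc (p @ [0]) 0#}"
        by (simp_all split: if_splits)
      from xs_single[OF h(3) l] have "pom_par_list (map snd xs) \<in> sem e1" using L0 by simp
      then have "pom_par_list (map snd xs) \<in> lang_star (sem e1)" by (rule star_base)
      then show "\<exists>j. y = enc p j \<and> ?R i (pom_par_list (map snd xs)) j" using h by simp
    qed (simp_all add: s)
  qed (auto simp: star_one)
  show "lang_star (sem e1) \<subseteq> lang_pa (aut e0) (enc p 0)"
  proof
    fix X assume "X \<in> lang_star (sem e1)"
    then obtain n where n: "X \<in> lang_pow (sem e1) n" unfolding lang_star_def by blast
    have "run (aut e0) (enc p 0) X (enc p 0)" using n
    proof (induction n arbitrary: X)
      case 0 then show ?case using run_one[of "aut e0" "enc p 0"] by simp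
    next
      case (Suc n)
      then have "X \<in> lang_seq (sem e1) (lang_pow (sem e1) n)" by simp
      then obtain U V where X: "X = pom_seq U V" "U \<in> sem e1" "V \<in> lang_pow (sem e1) n" by (rule lang_seqE)
      have r1: "run (aut e0) (enc p 0) U (enc p 0)"
        using L0 s X(2) by (intro run_call[of "enc p 0" _ _ "enc (p @ [0]) 0"]) simp_all
      show ?case using run_seq[OF r1 Suc.IH[OF X(3)]] X(1) by simp
    qed
    then show "X \<in> lang_pa (aut e0) (enc p 0)" using lang_supI[OF s, of 0 X] by simp
  qed
qed

lemma lang_main: "subexp e0 p = Some e \<Longrightarrow> lang_pa (aut e0) (enc p 0) = sem e"
proof (induction e arbitrary: p)
  case SZero then show ?case using lang_zero by simp
next
  case SOne then show ?case using lang_one by simp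
next
  case (SSym a) then show ?case using lang_sym by simp
next
  case (SPlus e1 e2)
  have s0: "subexp e0 (p @ [0]) = Some e1" using subexp_child[OF SPlus.prems, of 0] by simp
  have s1: "subexp e0 (p @ [1]) = Some e2" using subexp_child[OF SPlus.prems, of 1] by simp
  show ?case using lang_plus[OF SPlus.prems SPlus.IH(1)[OF s0] SPlus.IH(2)[OF s1]] by simp
next
  case (SSeq e1 e2)
  have s0: "subexp e0 (p @ [0]) = Some e1" using subexp_child[OF SSeq.prems, of 0] by simp
  have s1: "subexp e0 (p @ [1]) = Some e2" using subexp_child[OF SSeq.prems, of 1] by simp
  show ?case using lang_seqc[OF SSeq.prems SSeq.IH(1)[OF s0] SSeq.IH(2)[OF s1]] by simp
next
  case (SPar e1 e2)
  have s0: "subexp e0 (p @ [0]) = Some e1" using subexp_child[OF SPar.prems, of 0] by simp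
  have s1: "subexp e0 (p @ [1]) = Some e2" using subexp_child[OF SPar.prems, of 1] by simp
  show ?case using lang_parc[OF SPar.prems SPar.IH(1)[OF s0] SPar.IH(2)[OF s1]] by simp
next
  case (SStar e1)
  have s0: "subexp e0 (p @ [0]) = Some e1" using subexp_child[OF SStar.prems, of 0] by simp
  show ?case using lang_starc[OF SStar.prems SStar.IH[OF s0]] by simp
qed

theorem theorem7p16:
  fixes e :: "'a::finite sr_exp"
  shows "\<exists>(A :: (nat, 'a) pomset_automaton) q.
           wf_pa A \<and> finite_pa A \<and> fork_acyclic A \<and> q \<in> states A \<and> lang_pa A q = sem e"
proof (intro exI conjI)
  show "wf_pa (aut e)" by (rule wf_aut)
  show "finite_pa (aut e)" by (rule finite_aut)
  show "fork_acyclic (aut e)" by (rule fa_aut)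
  show "enc [] 0 \<in> states (aut e)" by simp
  show "lang_pa (aut e) (enc [] 0) = sem e" by (rule lang_main) simp
qed

end
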